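(* Let $G$ be a compact matrix quantum group with strong polynomial growth with respect to a length function $\ell$, and for $\Lambda\in\mathbb{N}$ let $A_\Lambda=\{\alpha\in\operatorname{Irred}(G):\ell(\alpha)\le\Lambda\}$. Then $(A_\Lambda)_{\Lambda\in\mathbb{N}}$ is a Følner sequence in the fusion algebra $F(G)$: for every finite nonempty $S\subseteq\operatorname{Irred}(G)$ and every $\varepsilon>0$ there is $\Lambda_0$ such that $\sum_{\xi\in\partial_S(A_\Lambda)}d(\xi)^2<\varepsilon\sum_{\xi\in A_\Lambda}d(\xi)^2$ for all $\Lambda\ge\Lambda_0$.
   Context: $\operatorname{Irred}(G)$ is a complete set of representatives of irreducible unitary corepresentations of $G$; $d(\alpha)$ is the dimension of $\alpha$, $e$ the trivial corepresentation, $\bar\alpha$ the conjugate. The fusion algebra $F(G)$ has basis $\operatorname{Irred}(G)$ with product $\alpha\beta=\sum_\gamma N^\gamma_{\alpha,\beta}\gamma$, $N^\gamma_{\alpha,\beta}$ the multiplicity of $\gamma$ in $\alpha\otimes\beta$; $\operatorname{supp}(\alpha\xi)=\{\gamma: N^\gamma_{\alpha,\xi}\ne0\}$. A length function $\ell:\operatorname{Irred}(G)\to[0,\infty)$ satisfies $\ell(e)=0$, $\ell(\bar\alpha)=\ell(\alpha)$, and $\ell(\gamma)\le\ell(\alpha)+\ell(\beta)$ whenever $N^\gamma_{\alpha,\beta}\ne0$. Strong polynomial growth w.r.t. $\ell$: there exist $c_1,c_2,s>0$ with $c_2n^s\le\sum_{\ell(\alpha)\in(n-1,n]}d(\alpha)^2\le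 c_1n^s$ for all $n\in\mathbb{N}$. For finite $S,F\subseteq\operatorname{Irred}(G)$ the boundary is $\partial_S(F)=\{\alpha\in F:\exists\xi\in S,\ \operatorname{supp}(\alpha\xi)\not\subseteq F\}\cup\{\alpha\in F^c:\exists\xi\in S,\ \operatorname{supp}(\alpha\xi)\not\subseteq F^c\}$, where $F^c=\operatorname{Irred}(G)\setminus F$. *)

theory Defs
  imports Complex_Main
begin

text \<open>The type 'a plays the role of Irred(G).  N g a b is the multiplicity N^g_{a,b}
 of g in a \<otimes> b; e is the trivial corepresentation, cbar the conjugation, d the dimension.\<close>

definition fsupp :: "('a \<Rightarrow> 'a \<Rightarrow> 'a \<Rightarrow> nat) \<Rightarrow> 'a \<Rightarrow> 'a \<Rightarrow> 'a set" where
  "fsupp N a b = {g. N g a b \<noteq> 0}"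

inductive_set generated_by :: "('a \<Rightarrow> 'a \<Rightarrow> 'a \<Rightarrow> nat) \<Rightarrow> 'a \<Rightarrow> 'a set \<Rightarrow> 'a set"
  for N e U where
  gen_e: "e \<in> generated_by N e U"
| gen_step: "a \<in> generated_by N e U \<Longrightarrow> u \<in> U \<Longrightarrow> N g a u \<noteq> 0 \<Longrightarrow> g \<in> generated_by N e U"

text \<open>Fusion rules of the irreducible corepresentations of a compact matrix quantum group:
 a based fusion ring with dimension function, Frobenius reciprocity, and finitely generated
 (every irreducible occurs in a tensor power of the fundamental corepresentation u \<oplus> conj u,
 whose irreducible constituents form the finite conjugation-closed set U).\<close>
definition cmqg_fusion :: "'a \<Rightarrow> ('a \<Rightarrow> 'a) \<Rightarrow> ('a \<Rightarrow> nat) \<Rightarrow> ('a \<Rightarrow> 'a \<Rightarrow> 'a \<Rightarrow> nat) \<Rightarrow> bool" where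
  "cmqg_fusion e cbar d N \<longleftrightarrow>
     (\<forall>a. cbar (cbar a) = a) \<and> cbar e = e \<and> d e = 1 \<and>
     (\<forall>a. d a \<ge> 1) \<and> (\<forall>a. d (cbar a) = d a) \<and>
     (\<forall>a b. finite (fsupp N a b)) \<and>
     (\<forall>a b. d a * d b = (\<Sum>g\<in>fsupp N a b. N g a b * d g)) \<and>
     (\<forall>a g. N g e a = (if g = a then 1 else 0) \<and> N g a e = (if g = a then 1 else 0)) \<and>
     (\<forall>a b g. N g a b = N a g (cbar b) \<and> N g a b = N b (cbar a) g) \<and>
     (\<forall>a b c f. (\<Sum>g\<in>fsupp N a b. N g a b * N f g c) = (\<Sum>g\<in>fsupp N b c. N g b c * N f a g)) \<and>
     (\<exists>U. finite U \<and> cbar ` U \<subseteq> U \<and> generated_by N e U = UNIV)"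

definition length_function :: "'a \<Rightarrow> ('a \<Rightarrow> 'a) \<Rightarrow> ('a \<Rightarrow> 'a \<Rightarrow> 'a \<Rightarrow> nat) \<Rightarrow> ('a \<Rightarrow> real) \<Rightarrow> bool" where
  "length_function e cbar N l \<longleftrightarrow>
     (\<forall>a. l a \<ge> 0) \<and> l e = 0 \<and> (\<forall>a. l (cbar a) = l a) \<and>
     (\<forall>a b g. N g a b \<noteq> 0 \<longrightarrow> l g \<le> l a + l b)"

definition strong_poly_growth :: "('a \<Rightarrow> nat) \<Rightarrow> ('a \<Rightarrow> real) \<Rightarrow> bool" where
  "strong_poly_growth d l \<longleftrightarrow>
     (\<exists>c1 c2 s::real. c1 > 0 \<and> c2 > 0 \<and> s > 0 \<and>
       (\<forall>n::nat. n \<ge> 1 \<longrightarrow>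
          finite {a. l a \<in> {real n - 1<..real n}} \<and>
          c2 * real n powr s \<le> (\<Sum>a\<in>{a. l a \<in> {real n - 1<..real n}}. real (d a) ^ 2) \<and>
          (\<Sum>a\<in>{a. l a \<in> {real n - 1<..real n}}. real (d a) ^ 2) \<le> c1 * real n powr s))"

definition fboundary :: "('a \<Rightarrow> 'a \<Rightarrow> 'a \<Rightarrow> nat) \<Rightarrow> 'a set \<Rightarrow> 'a set \<Rightarrow> 'a set" where
  "fboundary N S F =
     {a \<in> F. \<exists>x\<in>S. \<not> fsupp N a x \<subseteq> F} \<union> {a \<in> - F. \<exists>x\<in>S. \<not> fsupp N a x \<subseteq> - F}"

definition ball_set :: "('a \<Rightarrow> real) \<Rightarrow> nat \<Rightarrow> 'a set" where
  "ball_set l \<Lambda> = {a. l a \<le> real \<Lambda>}"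

end

theory Submission
  imports Defs
begin

definition shell :: "('a \<Rightarrow> real) \<Rightarrow> nat \<Rightarrow> 'a set" where
  "shell l n = {a. l a \<in> {real n - 1<..real n}}"

lemma shell_disj:
  assumes "a \<in> shell l n" "a \<in> shell l m" shows "n = m"
proof -
  have "real n - 1 < real m" "real m - 1 < real n" using assms by (auto simp: shell_def)
  hence "n < m + 1" "m < n + 1" by linarith+
  thus ?thesis by simp
qed

lemma shell_ceil:
  assumes "l a > 0" shows "a \<in> shell l (nat \<lceil>l a\<rceil>)"
proof -
  have "\<lceil>l a\<rceil> \<ge> 0" using assms by simp
  hence r: "real (nat \<lceil>l a\<rceil>) = of_int \<lceil>l a\<rceil>" by simp
  have "of_int \<lceil>l a\<rceil> - 1 < l a" "l a \<le> of_int \<lceil>l a\<rceil>"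
    using ceiling_correct[of "l a"] by auto
  thus ?thesis unfolding shell_def r by simp
qed

context
  fixes e :: 'a and cbar :: "'a \<Rightarrow> 'a" and d :: "'a \<Rightarrow> nat"
    and N :: "'a \<Rightarrow> 'a \<Rightarrow> 'a \<Rightarrow> nat" and l :: "'a \<Rightarrow> real"
  assumes F: "cmqg_fusion e cbar d N"
    and LF: "length_function e cbar N l"
    and SG: "strong_poly_growth d l"
begin

lemma Ffrob: "\<forall>a b g. N g a b = N a g (cbar b) \<and> N g a b = N b (cbar a) g"
  using F unfolding cmqg_fusion_def by (elim conjE) assumption
lemma frob1: "N g a b = N a g (cbar b)" using Ffrob by blast
lemma frob2: "N g a b = N b (cbar a) g" using Ffrob by blast
lemma Flen: "\<forall>a b g. N g a b \<noteq> 0 \<longrightarrow> l g \<le> l a + l b"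
  using LF unfolding length_function_def by (elim conjE) assumption
lemma lsub: "N g a b \<noteq> 0 \<Longrightarrow> l g \<le> l a + l b" using Flen by blast
lemma Flcbar: "\<forall>a. l (cbar a) = l a" using LF unfolding length_function_def by (elim conjE) assumption
lemma lcbar: "l (cbar a) = l a" using Flcbar by blast
lemma Flnn: "\<forall>a. l a \<ge> 0" using LF unfolding length_function_def by (elim conjE) assumption
lemma lnonneg: "l a \<ge> 0" using Flnn by blast
lemma le0: "l e = 0" using LF unfolding length_function_def by (elim conjE) assumption
lemma de: "d e = 1" using F unfolding cmqg_fusion_def by (elim conjE) assumption
lemma Ffin: "\<forall>a b. finite (fsupp N a b)" using F unfolding cmqg_fusion_def by (elim conjE) assumption
lemma fsupp_fin: "finite (fsupp N a b)" using Ffin by blast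
lemma Fdim: "\<forall>a b. d a * d b = (\<Sum>g\<in>fsupp N a b. N g a b * d g)"
  using F unfolding cmqg_fusion_def by (elim conjE) assumption
lemma Fd1: "\<forall>a. d a \<ge> 1" using F unfolding cmqg_fusion_def by (elim conjE) assumption

lemma supp_ne: "\<exists>g. N g a b \<noteq> 0"
proof (rule ccontr)
  assume "\<not> ?thesis"
  hence "fsupp N a b = {}" by (auto simp: fsupp_def)
  moreover have "d a * d b = (\<Sum>g\<in>fsupp N a b. N g a b * d g)" "d a \<ge> 1" "d b \<ge> 1"
    using Fdim Fd1 by blast+
  ultimately show False by simp
qed

lemma growth: "\<exists>c1 c2 s::real. c1 > 0 \<and> c2 > 0 \<and> s > 0 \<and>
       (\<forall>n::nat. n \<ge> 1 \<longrightarrow> finite (shell l n) \<and>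
          c2 * real n powr s \<le> (\<Sum>a\<in>shell l n. real (d a) ^ 2) \<and>
          (\<Sum>a\<in>shell l n. real (d a) ^ 2) \<le> c1 * real n powr s)"
  using SG unfolding strong_poly_growth_def shell_def by simp

lemma zero_finite: "finite {a. l a = 0}"
proof -
  obtain c1 c2 s :: real where G: "c1 > 0" "c2 > 0" "s > 0" "\<forall>n::nat. n \<ge> 1 \<longrightarrow> finite (shell l n) \<and>
          c2 * real n powr s \<le> (\<Sum>a\<in>shell l n. real (d a) ^ 2) \<and>
          (\<Sum>a\<in>shell l n. real (d a) ^ 2) \<le> c1 * real n powr s"
    using growth by blast
  have f1: "finite (shell l 1)" and p: "c2 * real 1 powr s \<le> (\<Sum>a\<in>shell l 1. real (d a) ^ 2)"
    using G(4) by auto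
  have "shell l 1 \<noteq> {}"
  proof
    assume "shell l 1 = {}"
    with p G(2) show False by simp
  qed
  then obtain a where a: "a \<in> shell l 1" by blast
  hence la: "0 < l a" "l a \<le> 1" by (auto simp: shell_def)
  have sub: "{z. l z = 0} \<subseteq> (\<Union>g\<in>shell l 1. fsupp N (cbar a) g)"
  proof
    fix z assume z: "z \<in> {z. l z = 0}"
    obtain g where g: "N g a z \<noteq> 0" using supp_ne by blast
    have 1: "l g \<le> l a + l z" using lsub g by blast
    have "N a g (cbar z) \<noteq> 0" using g frob1[of g a z] by simp
    hence "l a \<le> l g + l (cbar z)" by (rule lsub)
    hence "l g = l a" using 1 z lcbar by simp
    hence "g \<in> shell l 1" using la by (simp add: shell_def)
    moreover have "N z (cbar a) g \<noteq> 0" using g frob2[of g a z] by simp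
    ultimately show "z \<in> (\<Union>g\<in>shell l 1. fsupp N (cbar a) g)" by (auto simp: fsupp_def)
  qed
  have fin: "finite (\<Union>g\<in>shell l 1. fsupp N (cbar a) g)"
    using f1 fsupp_fin by blast
  show ?thesis using finite_subset[OF sub fin] .
qed

lemma bdry_sub:
  assumes "\<forall>x\<in>S. l x \<le> L"
  shows "fboundary N S (ball_set l \<Lambda>) \<subseteq> {a. real \<Lambda> - L < l a \<and> l a \<le> real \<Lambda> + L}"
proof
  fix a assume "a \<in> fboundary N S (ball_set l \<Lambda>)"
  hence "(l a \<le> \<Lambda> \<and> (\<exists>x g. x \<in> S \<and> N g a x \<noteq> 0 \<and> \<not> l g \<le> \<Lambda>)) \<or>
         (\<not> l a \<le> \<Lambda> \<and> (\<exists>x g. x \<in> S \<and> N g a x \<noteq> 0 \<and> l g \<le> \<Lambda>))"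
    unfolding fboundary_def ball_set_def fsupp_def by (simp add: subset_iff) blast
  then show "a \<in> {a. real \<Lambda> - L < l a \<and> l a \<le> real \<Lambda> + L}"
  proof
    assume "l a \<le> \<Lambda> \<and> (\<exists>x g. x \<in> S \<and> N g a x \<noteq> 0 \<and> \<not> l g \<le> \<Lambda>)"
    then obtain x g where i: "l a \<le> \<Lambda>" "x \<in> S" "N g a x \<noteq> 0" "\<not> l g \<le> \<Lambda>" by blast
    have "l g \<le> l a + l x" using lsub i by blast
    moreover have "l x \<le> L" using i assms by blast
    ultimately show ?thesis using i by simp
  next
    assume "\<not> l a \<le> \<Lambda> \<and> (\<exists>x g. x \<in> S \<and> N g a x \<noteq> 0 \<and> l g \<le> \<Lambda>)"
    then obtain x g where o: "\<not> l a \<le> \<Lambda>" "x \<in> S" "N g a x \<noteq> 0" "l g \<le> \<Lambda>" by blast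
    have "N a g (cbar x) \<noteq> 0" using o(3) frob1[of g a x] by simp
    hence "l a \<le> l g + l (cbar x)" by (rule lsub)
    moreover have "l x \<le> L" using o assms by blast
    ultimately show ?thesis using o lcbar by simp
  qed
qed

end


theorem proposition3p5:
  fixes e :: 'a and cbar :: "'a \<Rightarrow> 'a" and d :: "'a \<Rightarrow> nat"
    and N :: "'a \<Rightarrow> 'a \<Rightarrow> 'a \<Rightarrow> nat" and l :: "'a \<Rightarrow> real"
  assumes "cmqg_fusion e cbar d N"
    and "length_function e cbar N l"
    and "strong_poly_growth d l"
  shows "\<forall>S. finite S \<and> S \<noteq> {} \<longrightarrow> (\<forall>\<epsilon>>0. \<exists>\<Lambda>0::nat. \<forall>\<Lambda>\<ge>\<Lambda>0.
           finite (fboundary N S (ball_set l \<Lambda>)) \<and>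
           (\<Sum>x\<in>fboundary N S (ball_set l \<Lambda>). real (d x) ^ 2)
             < \<epsilon> * (\<Sum>x\<in>ball_set l \<Lambda>. real (d x) ^ 2))"
proof (intro allI impI)
  fix S :: "'a set"
  assume Sfin: "finite S \<and> S \<noteq> {}"
    fix \<epsilon> :: real assume ep: "\<epsilon> > 0"
    obtain c1 c2 s :: real where G: "c1 > 0" "c2 > 0" "s > 0" "\<And>n::nat. n \<ge> 1 \<Longrightarrow> finite (shell l n) \<and>
          c2 * real n powr s \<le> (\<Sum>a\<in>shell l n. real (d a) ^ 2) \<and>
          (\<Sum>a\<in>shell l n. real (d a) ^ 2) \<le> c1 * real n powr s"
      using growth[OF assms] by blast
    define L where "L = Max (l ` S)"
    have Lb: "\<forall>x\<in>S. l x \<le> L" unfolding L_def using Sfin by auto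
    obtain x0 where "x0 \<in> S" using Sfin by blast
    hence L0: "L \<ge> 0" using Lb lnonneg[OF assms] by (meson order_trans)
    define K where "K = nat \<lceil>L\<rceil>"
    have LK: "L \<le> real K" unfolding K_def using L0 by linarith
    define C where "C = 2 * real K * c1 * 6 powr s / (\<epsilon> * c2)"
    define \<Lambda>0 where "\<Lambda>0 = 2 * (nat \<lceil>C\<rceil> + 1) + K + 2"
    let ?f = "\<lambda>x. real (d x) ^ 2"
    show "\<exists>\<Lambda>0::nat. \<forall>\<Lambda>\<ge>\<Lambda>0.
           finite (fboundary N S (ball_set l \<Lambda>)) \<and>
           (\<Sum>x\<in>fboundary N S (ball_set l \<Lambda>). real (d x) ^ 2)
             < \<epsilon> * (\<Sum>x\<in>ball_set l \<Lambda>. real (d x) ^ 2)"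
    proof (rule exI[of _ \<Lambda>0], intro allI impI)
      fix \<Lambda> :: nat assume L0le: "\<Lambda>0 \<le> \<Lambda>"
      define M where "M = \<Lambda> div 2"
      have KL: "K \<le> \<Lambda>" using L0le unfolding \<Lambda>0_def by simp
      have M1: "M \<ge> nat \<lceil>C\<rceil> + 1" using L0le unfolding \<Lambda>0_def M_def by simp
      have MC: "real M > C" using M1 by linarith
      have Mpos: "M \<ge> 1" using M1 by simp
      have LM: "\<Lambda> \<le> 2 * M + 1" "M \<le> \<Lambda>" unfolding M_def by simp_all
      define I1 where "I1 = {\<Lambda> - K<..\<Lambda> + K}"
      define U1 where "U1 = (\<Union>n\<in>I1. shell l n)"
      have I1ge: "\<And>n. n \<in> I1 \<Longrightarrow> n \<ge> 1" unfolding I1_def by auto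
      have finI1: "finite I1" unfolding I1_def by simp
      have finU1: "finite U1" unfolding U1_def using finI1 I1ge G(4) by blast
      have BU1: "fboundary N S (ball_set l \<Lambda>) \<subseteq> U1"
      proof
        fix a assume "a \<in> fboundary N S (ball_set l \<Lambda>)"
        hence "a \<in> {a. real \<Lambda> - L < l a \<and> l a \<le> real \<Lambda> + L}"
          using bdry_sub[OF assms Lb] by blast
        hence a1: "real \<Lambda> - real K < l a" "l a \<le> real \<Lambda> + real K" using LK by auto
        hence "l a > 0" using KL by linarith
        hence sh: "a \<in> shell l (nat \<lceil>l a\<rceil>)" by (rule shell_ceil)
        define n where "n = nat \<lceil>l a\<rceil>"
        have "real n - 1 < l a" "l a \<le> real n" using sh unfolding n_def shell_def by auto
        hence "real n > real \<Lambda> - real K" "real n < real \<Lambda> + real K + 1" using a1 by linarith+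
        hence "n > \<Lambda> - K" "n \<le> \<Lambda> + K" using KL by (simp_all add: of_nat_diff)
        hence "n \<in> I1" unfolding I1_def by simp
        thus "a \<in> U1" unfolding U1_def using sh n_def by blast
      qed
      have disj: "\<forall>i\<in>X. \<forall>j\<in>X. i \<noteq> j \<longrightarrow> shell l i \<inter> shell l j = {}" for X :: "nat set"
        using shell_disj by (meson disjoint_iff)
      have "(\<Sum>x\<in>fboundary N S (ball_set l \<Lambda>). ?f x) \<le> (\<Sum>x\<in>U1. ?f x)"
        by (rule sum_mono2[OF finU1 BU1]) simp
      also have "\<dots> = (\<Sum>n\<in>I1. \<Sum>x\<in>shell l n. ?f x)"
        unfolding U1_def by (rule sum.UNION_disjoint[OF finI1 _ disj]) (use I1ge G(4) in blast)
      also have "\<dots> \<le> (\<Sum>n\<in>I1. c1 * real (\<Lambda> + K) powr s)"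
      proof (rule sum_mono)
        fix n assume n: "n \<in> I1"
        have "(\<Sum>x\<in>shell l n. ?f x) \<le> c1 * real n powr s" using G(4) I1ge[OF n] by blast
        also have "\<dots> \<le> c1 * real (\<Lambda> + K) powr s"
          using n G(1,3) unfolding I1_def by (intro mult_left_mono powr_mono2) auto
        finally show "(\<Sum>x\<in>shell l n. ?f x) \<le> c1 * real (\<Lambda> + K) powr s" .
      qed
      also have "\<dots> = real (2 * K) * c1 * real (\<Lambda> + K) powr s"
        unfolding I1_def using KL by simp
      also have "\<dots> \<le> real (2 * K) * c1 * (6 * real M) powr s"
      proof -
        have "\<Lambda> + K \<le> 6 * M" using LM KL Mpos by linarith
        hence "real (\<Lambda> + K) \<le> 6 * real M" by linarith
        thus ?thesis using G(1,3) by (intro mult_left_mono powr_mono2) auto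
      qed
      also have "\<dots> = 2 * real K * c1 * 6 powr s * real M powr s"
        by (simp add: powr_mult)
      finally have bsum: "(\<Sum>x\<in>fboundary N S (ball_set l \<Lambda>). ?f x) \<le> 2 * real K * c1 * 6 powr s * real M powr s" .
      define I2 where "I2 = {M<..\<Lambda>}"
      define U2 where "U2 = (\<Union>n\<in>I2. shell l n)"
      have I2ge: "\<And>n. n \<in> I2 \<Longrightarrow> n \<ge> 1" unfolding I2_def by auto
      have finI2: "finite I2" unfolding I2_def by simp
      have finBall: "finite (ball_set l \<Lambda>)"
      proof -
        have "ball_set l \<Lambda> \<subseteq> {a. l a = 0} \<union> (\<Union>n\<in>{1..\<Lambda>}. shell l n)"
        proof
          fix a assume a: "a \<in> ball_set l \<Lambda>"
          show "a \<in> {a. l a = 0} \<union> (\<Union>n\<in>{1..\<Lambda>}. shell l n)"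
          proof (cases "l a = 0")
            case False
            hence "l a > 0" using lnonneg[OF assms, of a] by simp
            hence sh: "a \<in> shell l (nat \<lceil>l a\<rceil>)" by (rule shell_ceil)
            define n where "n = nat \<lceil>l a\<rceil>"
            have "real n - 1 < l a" "l a \<le> real n" using sh unfolding n_def shell_def by auto
            moreover have "l a \<le> real \<Lambda>" using a unfolding ball_set_def by simp
            ultimately have "n \<ge> 1" "n \<le> \<Lambda>" using \<open>l a > 0\<close> by linarith+
            thus ?thesis using sh n_def by auto
          qed simp
        qed
        moreover have "finite ({a. l a = 0} \<union> (\<Union>n\<in>{1..\<Lambda>}. shell l n))"
          using zero_finite[OF assms] G(4) by auto
        ultimately show ?thesis by (rule finite_subset)
      qed
      have U2B: "U2 \<subseteq> ball_set l \<Lambda>"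
        unfolding U2_def I2_def ball_set_def shell_def by auto
      have "real M * c2 * real M powr s \<le> real (\<Lambda> - M) * (c2 * real M powr s)"
      proof -
        have "M \<le> \<Lambda> - M" unfolding M_def by simp
        hence "real M \<le> real (\<Lambda> - M)" by linarith
        hence "real M * (c2 * real M powr s) \<le> real (\<Lambda> - M) * (c2 * real M powr s)"
          using G(2) by (intro mult_right_mono) auto
        thus ?thesis by (simp add: mult.assoc)
      qed
      also have "\<dots> = (\<Sum>n\<in>I2. c2 * real M powr s)" unfolding I2_def by simp
      also have "\<dots> \<le> (\<Sum>n\<in>I2. c2 * real n powr s)"
        using G(2,3) unfolding I2_def by (intro sum_mono mult_left_mono powr_mono2) auto
      also have "\<dots> \<le> (\<Sum>n\<in>I2. \<Sum>x\<in>shell l n. ?f x)"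
        using G(4) I2ge by (intro sum_mono) blast
      also have "\<dots> = (\<Sum>x\<in>U2. ?f x)"
        unfolding U2_def by (rule sum.UNION_disjoint[OF finI2 _ disj, symmetric]) (use I2ge G(4) in blast)
      also have "\<dots> \<le> (\<Sum>x\<in>ball_set l \<Lambda>. ?f x)"
        by (rule sum_mono2[OF finBall U2B]) simp
      finally have ballsum: "real M * c2 * real M powr s \<le> (\<Sum>x\<in>ball_set l \<Lambda>. ?f x)" .
      have Mp: "real M powr s > 0" using Mpos by simp
      have "2 * real K * c1 * 6 powr s < \<epsilon> * c2 * real M"
        using MC ep G(2) unfolding C_def by (simp add: divide_less_eq mult.commute mult.left_commute)
      hence "2 * real K * c1 * 6 powr s * real M powr s < \<epsilon> * c2 * real M * real M powr s"
        using Mp by (rule mult_strict_right_mono)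
      also have "\<dots> = \<epsilon> * (real M * c2 * real M powr s)" by simp
      also have "\<dots> \<le> \<epsilon> * (\<Sum>x\<in>ball_set l \<Lambda>. ?f x)"
        using ballsum ep by simp
      finally show "finite (fboundary N S (ball_set l \<Lambda>)) \<and>
           (\<Sum>x\<in>fboundary N S (ball_set l \<Lambda>). real (d x) ^ 2)
             < \<epsilon> * (\<Sum>x\<in>ball_set l \<Lambda>. real (d x) ^ 2)"
        using bsum finite_subset[OF BU1 finU1] by simp
    qed
qed

end
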